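(* For every positive integer $n$, $C_0(n)=\lfloor n/2\rfloor+1$.
   Context: Define on triples of integers $\Gamma_{0,1}(\tau_1,\tau_2,\tau_3)=(\tau_2,\tau_3,\tau_2+\tau_3)$ and $\Gamma_{0,2}(\tau_1,\tau_2,\tau_3)=(\tau_1,\tau_3,\tau_1+\tau_3)$. For an integer $\alpha\ge1$, the $(\alpha,0)$-Euclid tree is the set of triples obtained from the root $(\alpha,\alpha,2\alpha)$ by finitely many (possibly zero) applications of $\Gamma_{0,1},\Gamma_{0,2}$; $\max T$ is the largest entry of $T$. Define $C_0(n)=\#\{T: T\text{ is on the }(\alpha,0)\text{-Euclid tree for some integer }\alpha\ge1,\ \max T=n\}+1$ (distinct triples counted). *)

theory Defs
  imports Main
begin

type_synonym triple = "int \<times> int \<times> int"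

definition Gamma01 :: "triple \<Rightarrow> triple" where
  "Gamma01 t = (case t of (t1, t2, t3) \<Rightarrow> (t2, t3, t2 + t3))"

definition Gamma02 :: "triple \<Rightarrow> triple" where
  "Gamma02 t = (case t of (t1, t2, t3) \<Rightarrow> (t1, t3, t1 + t3))"

inductive_set euclid_tree0 :: "int \<Rightarrow> triple set" for \<alpha> :: int where
  root: "(\<alpha>, \<alpha>, 2 * \<alpha>) \<in> euclid_tree0 \<alpha>"
| g1: "T \<in> euclid_tree0 \<alpha> \<Longrightarrow> Gamma01 T \<in> euclid_tree0 \<alpha>"
| g2: "T \<in> euclid_tree0 \<alpha> \<Longrightarrow> Gamma02 T \<in> euclid_tree0 \<alpha>"

definition max_triple :: "triple \<Rightarrow> int" where
  "max_triple t = (case t of (a, b, c) \<Rightarrow> max a (max b c))"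

definition C0 :: "int \<Rightarrow> nat" where
  "C0 n = card {T. (\<exists>\<alpha>::int. \<alpha> \<ge> 1 \<and> T \<in> euclid_tree0 \<alpha>) \<and> max_triple T = n} + 1"

end

theory Submission
  imports Defs
begin

lemma sound:
  assumes "T \<in> euclid_tree0 a" "a \<ge> 1"
  shows "\<exists>x y. T = (x, y, x + y) \<and> 1 \<le> x \<and> x \<le> y"
  using assms
proof (induction rule: euclid_tree0.induct)
  case root
  then show ?case by (rule_tac x=a in exI, rule_tac x=a in exI) simp
next
  case (g1 T)
  then obtain x y where "T = (x, y, x + y)" "1 \<le> x" "x \<le> y" by blast
  then show ?case unfolding Gamma01_def
    by (rule_tac x=y in exI, rule_tac x="x+y" in exI) simp
next
  case (g2 T)
  then obtain x y where "T = (x, y, x + y)" "1 \<le> x" "x \<le> y" by blast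
  then show ?case unfolding Gamma02_def
    by (rule_tac x=x in exI, rule_tac x="x+y" in exI) simp
qed

lemma complete_aux:
  "\<forall>x y. nat (x + y) = k \<longrightarrow> 1 \<le> x \<longrightarrow> x \<le> y \<longrightarrow>
     (\<exists>a\<ge>1. (x, y, x + y) \<in> euclid_tree0 a)"
proof (induction k rule: less_induct)
  case (less k)
  show ?case
  proof (intro allI impI)
    fix x y :: int
    assume k: "nat (x + y) = k" and x: "1 \<le> x" and xy: "x \<le> y"
    show "\<exists>a\<ge>1. (x, y, x + y) \<in> euclid_tree0 a"
    proof (cases "x = y")
      case True
      have "(x, x, 2 * x) \<in> euclid_tree0 x" by (rule euclid_tree0.root)
      moreover have "(x, y, x + y) = (x, x, 2 * x)" using True by simp
      ultimately have "(x, y, x + y) \<in> euclid_tree0 x" by simp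
      then show ?thesis using x by blast
    next
      case False
      show ?thesis
      proof (cases "y - x \<le> x")
        case True
        have lt: "nat ((y - x) + x) < k" using k x xy False by simp
        have p: "1 \<le> y - x" using False xy by simp
        have "\<exists>a\<ge>1. (y - x, x, (y - x) + x) \<in> euclid_tree0 a"
          using less.IH[OF lt, rule_format, OF refl p True] .
        then obtain a where a: "a \<ge> 1" "(y - x, x, (y - x) + x) \<in> euclid_tree0 a" by blast
        have "Gamma01 (y - x, x, (y - x) + x) \<in> euclid_tree0 a" using a(2) by (rule euclid_tree0.g1)
        moreover have "Gamma01 (y - x, x, (y - x) + x) = (x, y, x + y)" by (simp add: Gamma01_def)
        ultimately show ?thesis using a(1) by auto
      next
        case F2: False
        have lt: "nat (x + (y - x)) < k" using k x xy False by simp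
        have p: "x \<le> y - x" using F2 by simp
        have "\<exists>a\<ge>1. (x, y - x, x + (y - x)) \<in> euclid_tree0 a"
          using less.IH[OF lt, rule_format, OF refl x p] .
        then obtain a where a: "a \<ge> 1" "(x, y - x, x + (y - x)) \<in> euclid_tree0 a" by blast
        have "Gamma02 (x, y - x, x + (y - x)) \<in> euclid_tree0 a" using a(2) by (rule euclid_tree0.g2)
        moreover have "Gamma02 (x, y - x, x + (y - x)) = (x, y, x + y)" by (simp add: Gamma02_def)
        ultimately show ?thesis using a(1) by auto
      qed
    qed
  qed
qed

lemma complete: "1 \<le> x \<Longrightarrow> x \<le> y \<Longrightarrow> \<exists>a\<ge>1. (x, y, x + y) \<in> euclid_tree0 a"
  using complete_aux[of "nat (x + y)"] by simp

theorem lemma3p4: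
  fixes n :: int
  assumes "n \<ge> 1"
  shows "int (C0 n) = n div 2 + 1"
proof -
  have S: "{T. (\<exists>\<alpha>::int. \<alpha> \<ge> 1 \<and> T \<in> euclid_tree0 \<alpha>) \<and> max_triple T = n}
         = (\<lambda>x. (x, n - x, n)) ` {1..n div 2}" (is "?A = ?B")
  proof
    show "?A \<subseteq> ?B"
    proof
      fix T assume "T \<in> ?A"
      then obtain a where a: "a \<ge> 1" "T \<in> euclid_tree0 a" and m: "max_triple T = n" by blast
      from sound[OF a(2) a(1)] obtain x y where T: "T = (x, y, x + y)" "1 \<le> x" "x \<le> y" by blast
      have "x + y = n" using m T by (simp add: max_triple_def)
      then show "T \<in> ?B" using T by (auto intro!: image_eqI[where x=x])
    qed
  next
    show "?B \<subseteq> ?A"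
    proof
      fix T assume "T \<in> ?B"
      then obtain x where x: "1 \<le> x" "x \<le> n div 2" and T: "T = (x, n - x, n)" by auto
      have "x \<le> n - x" using x by linarith
      from complete[OF x(1) this] obtain a where "a \<ge> 1" "(x, n - x, x + (n - x)) \<in> euclid_tree0 a" by blast
      moreover have "max_triple T = n" using T x \<open>x \<le> n - x\<close> by (simp add: max_triple_def)
      ultimately show "T \<in> ?A" using T by auto
    qed
  qed
  have "inj_on (\<lambda>x. (x, n - x, n)) {1..n div 2}" by (auto simp: inj_on_def)
  then have "card ?B = card {1..n div 2}" by (rule card_image)
  then have "card ?A = nat (n div 2)" using S by simp
  then show ?thesis unfolding C0_def using assms by simp
qed

end
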